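(* Let $G$ be a homogeneous complete $k$-partite graph, with vertices $t_1,\dots,t_s$. The following are equivalent: (a) the graph $\mathcal{G}_{I_c(G)}$ of $I_c(G)$ is a complete graph; (b) $G$ is a complete graph; (c) ${\rm v}(I_c(G))=\alpha_0(G)-1$.
   Context: $G$ is a homogeneous complete $k$-partite graph if $G=G_1*\cdots*G_k$, $k\ge2$, is the join of pairwise vertex-disjoint graphs without edges each having the same number $p$ of vertices (the join contains all edges between vertices of distinct $G_i$). Such a $G$ is unmixed (all minimal vertex covers have the same size). $\alpha_0(G)$ is the minimum size of a vertex cover. $I_c(G)\subset S=K[t_1,\ldots,t_s]$ ($K$ a field) is generated by $\prod_{t_i\in C}t_i$ over minimal vertex covers $C$. For unmixed $G$ with minimal vertex covers $C_1,\ldots,C_r$, the graph $\mathcal{G}_{I_c(G)}$ has vertex set $\{C_1,\ldots,C_r\}$ and $\{C_i,C_j\}$ ($i\neq j$) is an edge iff $|C_i\cup C_j|=|C_i|+1$. For a graded ideal $I\subset S$, ${\rm v}(I)=\min\{d\ge0:\exists f\in S_d,\ \exists\mathfrak p\in{\rm Ass}(I),\ (I\colon f)=\mathfrak p\}$. *)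

theory Defs
  imports Main "HOL-Library.Poly_Mapping"
begin

type_synonym ('v, 'k) mpoly = "('v \<Rightarrow>\<^sub>0 nat) \<Rightarrow>\<^sub>0 'k"

definition var :: "'v \<Rightarrow> ('v, 'k::comm_ring_1) mpoly" where
  "var v = Poly_Mapping.single (Poly_Mapping.single v 1) 1"

definition mon_deg :: "('v \<Rightarrow>\<^sub>0 nat) \<Rightarrow> nat" where
  "mon_deg m = (\<Sum>v\<in>Poly_Mapping.keys m. Poly_Mapping.lookup m v)"

definition homog_of_deg :: "nat \<Rightarrow> ('v, 'k::comm_ring_1) mpoly set" where
  "homog_of_deg d = {f. \<forall>m\<in>Poly_Mapping.keys f. mon_deg m = d}"

definition is_ideal :: "'a::comm_ring_1 set \<Rightarrow> bool" where
  "is_ideal I \<longleftrightarrow> 0 \<in> I \<and> (\<forall>a\<in>I. \<forall>b\<in>I. a + b \<in> I) \<and> (\<forall>a\<in>I. \<forall>r. r * a \<in> I)"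

definition ideal_gen :: "'a::comm_ring_1 set \<Rightarrow> 'a set" where
  "ideal_gen X = \<Inter>{I. is_ideal I \<and> X \<subseteq> I}"

definition prime_ideal :: "'a::comm_ring_1 set \<Rightarrow> bool" where
  "prime_ideal P \<longleftrightarrow> is_ideal P \<and> 1 \<notin> P \<and> (\<forall>a b. a * b \<in> P \<longrightarrow> a \<in> P \<or> b \<in> P)"

definition colon_ideal :: "'a::comm_ring_1 set \<Rightarrow> 'a \<Rightarrow> 'a set" where
  "colon_ideal I f = {g. g * f \<in> I}"

definition Ass :: "'a::comm_ring_1 set \<Rightarrow> 'a set set" where
  "Ass I = {P. prime_ideal P \<and> (\<exists>f. colon_ideal I f = P)}"

definition v_number :: "('v, 'k::field) mpoly set \<Rightarrow> nat" where
  "v_number I = (LEAST d. \<exists>f\<in>homog_of_deg d. \<exists>P\<in>Ass I. colon_ideal I f = P)"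

text \<open>A graph is given by its edge set E, a set of 2-element vertex sets.\<close>

definition vertex_cover :: "'v set set \<Rightarrow> 'v set \<Rightarrow> bool" where
  "vertex_cover E C \<longleftrightarrow> (\<forall>e\<in>E. e \<inter> C \<noteq> {})"

definition min_vertex_cover :: "'v set set \<Rightarrow> 'v set \<Rightarrow> bool" where
  "min_vertex_cover E C \<longleftrightarrow> vertex_cover E C \<and> (\<forall>D. D \<subset> C \<longrightarrow> \<not> vertex_cover E D)"

definition alpha0 :: "'v set set \<Rightarrow> nat" where
  "alpha0 E = (LEAST n. \<exists>C. vertex_cover E C \<and> card C = n)"

definition cover_ideal :: "'v::finite set set \<Rightarrow> ('v, 'k::field) mpoly set" where
  "cover_ideal E = ideal_gen {(\<Prod>v\<in>C. var v) | C. min_vertex_cover E C}"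

text \<open>The graph G_{I_c(G)} on the minimal vertex covers is complete.\<close>
definition cover_graph_complete :: "'v set set \<Rightarrow> bool" where
  "cover_graph_complete E \<longleftrightarrow>
     (\<forall>C1 C2. min_vertex_cover E C1 \<and> min_vertex_cover E C2 \<and> C1 \<noteq> C2
        \<longrightarrow> card (C1 \<union> C2) = card C1 + 1)"

definition complete_graph :: "'v set set \<Rightarrow> bool" where
  "complete_graph E \<longleftrightarrow> (\<forall>u v. u \<noteq> v \<longrightarrow> {u, v} \<in> E)"

definition homog_complete_multipartite :: "'v set set \<Rightarrow> nat \<Rightarrow> nat \<Rightarrow> bool" where
  "homog_complete_multipartite E k p \<longleftrightarrow> 2 \<le> k \<and>
     (\<exists>P :: 'v \<Rightarrow> nat. (\<forall>v. P v < k) \<and> (\<forall>i<k. card {v. P v = i} = p) \<and>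
        E = {{u, v} | u v. P u \<noteq> P v})"

end

theory Submission
  imports Defs
begin


lemma is_ideal_ideal_gen: "is_ideal (ideal_gen X)"
  unfolding ideal_gen_def is_ideal_def by auto

lemma ideal_gen_sup: "X \<subseteq> ideal_gen X"
  unfolding ideal_gen_def by auto

lemma ideal_gen_least: "is_ideal J \<Longrightarrow> X \<subseteq> J \<Longrightarrow> ideal_gen X \<subseteq> J"
  unfolding ideal_gen_def by auto

lemma ideal_mult_right: "is_ideal I \<Longrightarrow> a \<in> I \<Longrightarrow> a * r \<in> I"
  unfolding is_ideal_def by (metis mult.commute)

lemma ideal_sum: assumes "is_ideal I" "finite A" "\<And>x. x \<in> A \<Longrightarrow> f x \<in> I" shows "sum f A \<in> I"
  using assms(2,3) by (induction A rule: finite_induct) (use assms(1) in \<open>auto simp: is_ideal_def\<close>)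

lemma ideal_diff: "is_ideal I \<Longrightarrow> a \<in> I \<Longrightarrow> b \<in> I \<Longrightarrow> a - b \<in> I"
proof -
  assume I: "is_ideal I" and a: "a \<in> I" and b: "b \<in> I"
  have "(-1) * b \<in> I" using I b unfolding is_ideal_def by blast
  then have "a + (-1) * b \<in> I" using I a unfolding is_ideal_def by blast
  then show ?thesis by simp
qed

lemma prime_prod:
  assumes "prime_ideal P" "finite C" "(\<Prod>v\<in>C. x v) \<in> P"
  shows "\<exists>v\<in>C. x v \<in> P"
  using assms(2,3)
proof (induction C rule: finite_induct)
  case empty then show ?case using assms(1) by (simp add: prime_ideal_def)
next
  case (insert a F)
  then have "x a * (\<Prod>v\<in>F. x v) \<in> P" by simp
  then have "x a \<in> P \<or> (\<Prod>v\<in>F. x v) \<in> P" using assms(1) unfolding prime_ideal_def by blast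
  then show ?case using insert by blast
qed

lemma colon_prime_ne0: "prime_ideal (colon_ideal I f) \<Longrightarrow> is_ideal I \<Longrightarrow> f \<noteq> 0"
  unfolding prime_ideal_def colon_ideal_def is_ideal_def by auto

lemma ideal_sub_colon: "is_ideal I \<Longrightarrow> I \<subseteq> colon_ideal I f"
  unfolding colon_ideal_def using ideal_mult_right by blast

lemma monomial_ideal:
  fixes Phi :: "('v \<Rightarrow>\<^sub>0 nat) \<Rightarrow> bool"
  assumes up: "\<And>x y. Phi y \<Longrightarrow> Phi (x + y)"
  shows "is_ideal {g :: ('v, 'k::comm_ring_1) mpoly. \<forall>m\<in>Poly_Mapping.keys g. Phi m}"
  unfolding is_ideal_def
proof (intro conjI ballI allI)
  fix a b :: "('v, 'k) mpoly"
  assume a: "a \<in> {g. \<forall>m\<in>Poly_Mapping.keys g. Phi m}" and b: "b \<in> {g. \<forall>m\<in>Poly_Mapping.keys g. Phi m}"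
  show "a + b \<in> {g. \<forall>m\<in>Poly_Mapping.keys g. Phi m}"
    using a b keys_add[of a b] by blast
next
  fix a r :: "('v, 'k) mpoly"
  assume a: "a \<in> {g. \<forall>m\<in>Poly_Mapping.keys g. Phi m}"
  show "r * a \<in> {g. \<forall>m\<in>Poly_Mapping.keys g. Phi m}"
  proof (rule CollectI, rule ballI)
    fix m assume "m \<in> Poly_Mapping.keys (r * a)"
    then obtain x y where "m = x + y" "y \<in> Poly_Mapping.keys a" using keys_mult[of r a] by blast
    then show "Phi m" using a up by blast
  qed
qed simp

lemma poly_expand: "(g :: ('a \<Rightarrow>\<^sub>0 'b::comm_monoid_add)) = (\<Sum>m\<in>Poly_Mapping.keys g. Poly_Mapping.single m (Poly_Mapping.lookup g m))"
proof (rule poly_mapping_eqI)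
  fix x
  have "Poly_Mapping.lookup (\<Sum>m\<in>Poly_Mapping.keys g. Poly_Mapping.single m (Poly_Mapping.lookup g m)) x
      = (\<Sum>m\<in>Poly_Mapping.keys g. (if m = x then Poly_Mapping.lookup g m else 0))"
    by (simp add: lookup_sum lookup_single when_def)
  also have "\<dots> = Poly_Mapping.lookup g x"
    by (simp add: in_keys_iff)
  finally show "Poly_Mapping.lookup g x = Poly_Mapping.lookup (\<Sum>m\<in>Poly_Mapping.keys g. Poly_Mapping.single m (Poly_Mapping.lookup g m)) x" by simp
qed

lemma lookup_single_mult:
  "Poly_Mapping.lookup (Poly_Mapping.single mu (1::'k::comm_ring_1) * g) (mu + m) = Poly_Mapping.lookup g (m :: 'v \<Rightarrow>\<^sub>0 nat)"
proof -
  have "Poly_Mapping.lookup (Poly_Mapping.single mu (1::'k) * g) (mu + m)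
     = (\<Sum>l. (1 when mu = l) * (\<Sum>q. Poly_Mapping.lookup g q when mu + m = l + q))"
    by (simp add: lookup_mult lookup_single)
  also have "\<dots> = (\<Sum>l. (\<Sum>q. Poly_Mapping.lookup g q when mu + m = l + q) when mu = l)"
    by (rule Sum_any.cong) (simp add: when_def)
  also have "\<dots> = (\<Sum>q. Poly_Mapping.lookup g q when mu + m = mu + q)"
    by (simp only: Sum_any_when_equal')
  also have "\<dots> = (\<Sum>q. Poly_Mapping.lookup g q when q = m)"
    by (rule Sum_any.cong) (auto simp: when_def)
  also have "\<dots> = Poly_Mapping.lookup g m" by simp
  finally show ?thesis .
qed

lemma keys_single_mult:
  "Poly_Mapping.keys (Poly_Mapping.single mu (1::'k::comm_ring_1) * g) \<subseteq> (\<lambda>m. mu + m) ` Poly_Mapping.keys g"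
  using keys_mult[of "Poly_Mapping.single mu (1::'k)" g] by auto

lemma no_zero_div:
  fixes f g :: "('v::finite \<Rightarrow>\<^sub>0 nat) \<Rightarrow>\<^sub>0 'k::idom"
  assumes f0: "f \<noteq> 0" and g0: "g \<noteq> 0" shows "f * g \<noteq> 0"
proof -
  obtain enc :: "'v \<Rightarrow> nat" and n where "enc ` UNIV = {i. i < n}" "inj_on enc UNIV"
    using finite_imp_inj_to_nat_seg[of "UNIV :: 'v set"] by auto
  then have inj: "inj enc" by simp
  define h where "h m = (\<lambda>i. \<Sum>v\<in>{v. enc v = i}. Poly_Mapping.lookup m v)" for m :: "'v \<Rightarrow>\<^sub>0 nat"
  define phi where "phi m = Abs_poly_mapping (h m)" for m
  have fin: "finite {i. h m i \<noteq> 0}" for m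
  proof -
    have "{i. h m i \<noteq> 0} \<subseteq> range enc"
    proof (rule subsetI)
      fix i assume "i \<in> {i. h m i \<noteq> 0}"
      then have "{v. enc v = i} \<noteq> {}" unfolding h_def by (metis (mono_tags) mem_Collect_eq sum.empty)
      then show "i \<in> range enc" by auto
    qed
    then show ?thesis by (rule finite_subset) simp
  qed
  have lk: "Poly_Mapping.lookup (phi m) i = h m i" for m i
    unfolding phi_def using fin by simp
  have add: "phi (x + y) = phi x + phi y" for x y
    by (rule poly_mapping_eqI) (simp add: lk lookup_add h_def sum.distrib)
  have hv: "h m (enc v) = Poly_Mapping.lookup m v" for m v
  proof -
    have "{w. enc w = enc v} = {v}" using inj by (auto dest: injD)
    then show ?thesis unfolding h_def by simp
  qed
  have phiinj: "phi x = phi y \<Longrightarrow> x = y" for x y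
  proof (rule poly_mapping_eqI)
    fix v assume "phi x = phi y"
    then have "Poly_Mapping.lookup (phi x) (enc v) = Poly_Mapping.lookup (phi y) (enc v)" by simp
    then show "Poly_Mapping.lookup x v = Poly_Mapping.lookup y v" by (simp add: lk hv)
  qed
  have ex_max: "\<exists>a\<in>Poly_Mapping.keys q. \<forall>x\<in>Poly_Mapping.keys q. phi x \<le> phi a"
    if "q \<noteq> 0" for q :: "('v \<Rightarrow>\<^sub>0 nat) \<Rightarrow>\<^sub>0 'k"
  proof -
    have ne: "phi ` Poly_Mapping.keys q \<noteq> {}" using that by simp
    have fn: "finite (phi ` Poly_Mapping.keys q)" by simp
    obtain a where "a \<in> Poly_Mapping.keys q" and amax: "phi a = Max (phi ` Poly_Mapping.keys q)"
      using Max_in[OF fn ne] by auto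
    moreover have "\<forall>x\<in>Poly_Mapping.keys q. phi x \<le> phi a"
      using Max_ge[OF fn] amax by (metis imageI)
    ultimately show ?thesis by blast
  qed
  obtain a where a: "a \<in> Poly_Mapping.keys f" "\<And>x. x\<in>Poly_Mapping.keys f \<Longrightarrow> phi x \<le> phi a"
    using ex_max[OF f0] by blast
  obtain b where b: "b \<in> Poly_Mapping.keys g" "\<And>x. x\<in>Poly_Mapping.keys g \<Longrightarrow> phi x \<le> phi b"
    using ex_max[OF g0] by blast
  have key: "x = a \<and> y = b" if "x \<in> Poly_Mapping.keys f" "y \<in> Poly_Mapping.keys g" "x + y = a + b" for x y
  proof -
    have xa: "phi x \<le> phi a" and yb: "phi y \<le> phi b" using a b that by auto
    have e: "phi x + phi y = phi a + phi b" using that(3) add by metis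
    have "phi x = phi a"
    proof (rule ccontr)
      assume "phi x \<noteq> phi a"
      then have "phi x < phi a" using xa by simp
      then have "phi x + phi y < phi a + phi b" using yb by (rule add_less_le_mono)
      then show False using e by simp
    qed
    then have "x = a" by (rule phiinj)
    then show ?thesis using that(3) by simp
  qed
  define ca where "ca = Poly_Mapping.lookup f a"
  define cb where "cb = Poly_Mapping.lookup g b"
  define f' where "f' = f - Poly_Mapping.single a ca"
  define g' where "g' = g - Poly_Mapping.single b cb"
  have kf': "Poly_Mapping.keys f' \<subseteq> Poly_Mapping.keys f - {a}"
    unfolding f'_def ca_def by (auto simp: in_keys_iff lookup_minus lookup_single when_def split: if_splits)
  have kg': "Poly_Mapping.keys g' \<subseteq> Poly_Mapping.keys g - {b}"
    unfolding g'_def cb_def by (auto simp: in_keys_iff lookup_minus lookup_single when_def split: if_splits)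
  have dec: "f * g = Poly_Mapping.single a ca * Poly_Mapping.single b cb + Poly_Mapping.single a ca * g' + f' * g"
    unfolding f'_def g'_def by (simp add: algebra_simps)
  have l2: "Poly_Mapping.lookup (Poly_Mapping.single a ca * g') (a + b) = 0"
  proof -
    have "a + b \<notin> Poly_Mapping.keys (Poly_Mapping.single a ca * g')"
    proof
      assume "a + b \<in> Poly_Mapping.keys (Poly_Mapping.single a ca * g')"
      then obtain x y where "x \<in> Poly_Mapping.keys (Poly_Mapping.single a ca)" "y \<in> Poly_Mapping.keys g'" "a + b = x + y"
        using keys_mult by blast
      then show False using kg' by (auto split: if_splits)
    qed
    then show ?thesis by (simp add: in_keys_iff)
  qed
  have l3: "Poly_Mapping.lookup (f' * g) (a + b) = 0"
  proof -
    have "a + b \<notin> Poly_Mapping.keys (f' * g)"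
    proof
      assume "a + b \<in> Poly_Mapping.keys (f' * g)"
      then obtain x y where "x \<in> Poly_Mapping.keys f'" "y \<in> Poly_Mapping.keys g" "a + b = x + y"
        using keys_mult by blast
      then show False using kf' key by force
    qed
    then show ?thesis by (simp add: in_keys_iff)
  qed
  have "Poly_Mapping.lookup (f * g) (a + b) = ca * cb"
    by (simp add: dec lookup_add l2 l3 mult_single)
  moreover have "ca * cb \<noteq> 0" using a(1) b(1) by (simp add: ca_def cb_def in_keys_iff)
  ultimately show ?thesis by auto
qed

definition Qab :: "'v \<Rightarrow> 'v \<Rightarrow> ('v, 'k::comm_ring_1) mpoly set" where
  "Qab a b = {g. \<forall>m\<in>Poly_Mapping.keys g. 0 < Poly_Mapping.lookup m a \<or> 0 < Poly_Mapping.lookup m b}"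

lemma Qab_ideal: "is_ideal (Qab a b)"
  unfolding Qab_def by (rule monomial_ideal) (auto simp: lookup_add)

lemma Qab_prime: "prime_ideal (Qab a b :: ('v::finite, 'k::field) mpoly set)"
proof -
  let ?c = "\<lambda>m::'v \<Rightarrow>\<^sub>0 nat. Poly_Mapping.lookup m a = 0 \<and> Poly_Mapping.lookup m b = 0"
  define proj where "proj g = Abs_poly_mapping (\<lambda>m. if ?c m then Poly_Mapping.lookup g m else 0)"
    for g :: "('v, 'k) mpoly"
  have lp: "Poly_Mapping.lookup (proj g) m = (if ?c m then Poly_Mapping.lookup g m else 0)" for g m
  proof -
    have "finite {m. (if ?c m then Poly_Mapping.lookup g m else 0) \<noteq> 0}"
      by (rule finite_subset[of _ "Poly_Mapping.keys g"]) (auto simp: in_keys_iff)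
    then show ?thesis unfolding proj_def by simp
  qed
  have r: "g - proj g \<in> Qab a b" for g
    unfolding Qab_def by (auto simp: in_keys_iff lookup_minus lp split: if_splits)
  have kp: "Poly_Mapping.keys (proj g) \<subseteq> {m. ?c m}" for g
    by (auto simp: in_keys_iff lp split: if_splits)
  have nz: "proj g \<noteq> 0" if "g \<notin> Qab a b" for g
  proof -
    have "\<not> (\<forall>m\<in>Poly_Mapping.keys g. 0 < Poly_Mapping.lookup m a \<or> 0 < Poly_Mapping.lookup m b)"
      using that unfolding Qab_def by simp
    then obtain m where "m \<in> Poly_Mapping.keys g" "?c m" by auto
    then have "Poly_Mapping.lookup (proj g) m \<noteq> 0" by (simp add: lp in_keys_iff)
    then show ?thesis by auto
  qed
  have I: "is_ideal (Qab a b :: ('v, 'k) mpoly set)" by (rule Qab_ideal)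
  have one: "(1 :: ('v,'k) mpoly) \<notin> Qab a b" unfolding Qab_def by simp
  have pr: "g \<in> Qab a b \<or> h \<in> Qab a b" if gh: "g * h \<in> Qab a b" for g h :: "('v, 'k) mpoly"
  proof (rule ccontr)
    assume "\<not> (g \<in> Qab a b \<or> h \<in> Qab a b)"
    then have g: "g \<notin> Qab a b" and h: "h \<notin> Qab a b" by auto
    have "proj g * proj h \<noteq> 0" using no_zero_div nz g h by blast
    have eq: "proj g * proj h = g * h - proj g * (h - proj h) - h * (g - proj g)"
      by (simp add: algebra_simps)
    have "proj g * (h - proj h) \<in> Qab a b" using I r unfolding is_ideal_def by blast
    moreover have "h * (g - proj g) \<in> Qab a b" using I r unfolding is_ideal_def by blast
    ultimately have inQ: "proj g * proj h \<in> Qab a b" unfolding eq using gh ideal_diff[OF I] by blast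
    have "Poly_Mapping.keys (proj g * proj h) = {}"
    proof (rule ccontr)
      assume "Poly_Mapping.keys (proj g * proj h) \<noteq> {}"
      then obtain m where m: "m \<in> Poly_Mapping.keys (proj g * proj h)" by blast
      then obtain x y where "x \<in> Poly_Mapping.keys (proj g)" "y \<in> Poly_Mapping.keys (proj h)" "m = x + y"
        using keys_mult by blast
      then have "?c m" using kp by (auto simp: lookup_add)
      then show False using inQ m unfolding Qab_def by auto
    qed
    then show False using \<open>proj g * proj h \<noteq> 0\<close> by simp
  qed
  show ?thesis unfolding prime_ideal_def using I one pr by blast
qed

lemma card_Compl: "card (- (A :: 'a::finite set)) = card (UNIV :: 'a set) - card A"
proof -
  have "- A = UNIV - A" by auto
  then show ?thesis by (simp add: card_Diff_subset)
qed

locale hcm =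
  fixes E :: "'v::finite set set" and k p :: nat and P :: "'v \<Rightarrow> nat"
  assumes k2: "2 \<le> k" and Pk: "\<And>v. P v < k"
    and cp: "\<And>i. i < k \<Longrightarrow> card {v. P v = i} = p"
    and E: "E = {{u, v} | u v. P u \<noteq> P v}"
begin

lemma p_pos: "1 \<le> p"
proof -
  obtain v0 :: 'v where True by blast
  have "v0 \<in> {v. P v = P v0}" by simp
  then have "card {v. P v = P v0} > 0" by (metis card_gt_0_iff empty_iff finite)
  then show ?thesis using cp[OF Pk[of v0]] by simp
qed

lemma k0: "0 < k" using k2 by simp
lemma k1: "1 < k" using k2 by simp

lemma part_ne: "i < k \<Longrightarrow> \<exists>v. P v = i"
  using cp[of i] p_pos by (metis (mono_tags) Collect_empty_eq card.empty not_one_le_zero)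

lemma vc_iff: "vertex_cover E C \<longleftrightarrow> (\<forall>u v. P u \<noteq> P v \<longrightarrow> u \<in> C \<or> v \<in> C)"
proof
  assume H: "vertex_cover E C"
  show "\<forall>u v. P u \<noteq> P v \<longrightarrow> u \<in> C \<or> v \<in> C"
  proof (intro allI impI)
    fix u v assume "P u \<noteq> P v"
    then have "{u, v} \<in> E" unfolding E by blast
    then have "{u, v} \<inter> C \<noteq> {}" using H unfolding vertex_cover_def by blast
    then show "u \<in> C \<or> v \<in> C" by auto
  qed
next
  assume H: "\<forall>u v. P u \<noteq> P v \<longrightarrow> u \<in> C \<or> v \<in> C"
  show "vertex_cover E C" unfolding vertex_cover_def
  proof
    fix e assume "e \<in> E"
    then obtain u v where "e = {u, v}" "P u \<noteq> P v" unfolding E by blast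
    then show "e \<inter> C \<noteq> {}" using H by blast
  qed
qed

lemma C_vc: "vertex_cover E {v. P v \<noteq> i}"
  unfolding vc_iff by auto

lemma mvc_iff: "min_vertex_cover E C \<longleftrightarrow> (\<exists>i<k. C = {v. P v \<noteq> i})"
proof
  assume m: "min_vertex_cover E C"
  then have vc: "vertex_cover E C" and mn: "\<And>D. D \<subset> C \<Longrightarrow> \<not> vertex_cover E D"
    unfolding min_vertex_cover_def by auto
  have "C \<noteq> UNIV"
  proof
    assume "C = UNIV"
    obtain w where "P w = 0" using part_ne[OF k0] by blast
    then have "w \<notin> {v. P v \<noteq> 0}" by simp
    then have "{v. P v \<noteq> 0} \<subset> C" using \<open>C = UNIV\<close> by blast
    then show False using mn C_vc by blast
  qed
  then obtain w where w: "w \<notin> C" by blast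
  have sub: "{v. P v \<noteq> P w} \<subseteq> C" using vc w unfolding vc_iff by blast
  have "C = {v. P v \<noteq> P w}"
  proof (rule ccontr)
    assume "C \<noteq> {v. P v \<noteq> P w}"
    then have "{v. P v \<noteq> P w} \<subset> C" using sub by blast
    then show False using mn C_vc by blast
  qed
  then show "\<exists>i<k. C = {v. P v \<noteq> i}" using Pk by blast
next
  assume "\<exists>i<k. C = {v. P v \<noteq> i}"
  then obtain i where i: "i < k" "C = {v. P v \<noteq> i}" by blast
  have "\<not> vertex_cover E D" if DC: "D \<subset> C" for D
  proof
    assume vD: "vertex_cover E D"
    obtain x where x: "x \<in> C" "x \<notin> D" using DC by blast
    obtain y where y: "P y = i" using part_ne i by blast
    have "y \<notin> D" using y i DC by blast
    moreover have "P x \<noteq> P y" using x y i by simp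
    ultimately show False using vD x unfolding vc_iff by blast
  qed
  then show "min_vertex_cover E C" unfolding min_vertex_cover_def using C_vc i by blast
qed


lemma card_C: "i < k \<Longrightarrow> card {v. P v \<noteq> i} = card (UNIV :: 'v set) - p"
proof -
  assume i: "i < k"
  have "{v. P v \<noteq> i} = - {v. P v = i}" by auto
  then show ?thesis using card_Compl[of "{v. P v = i}"] cp[OF i] by simp
qed

lemma p_le_N: "p \<le> card (UNIV :: 'v set)"
  using cp[OF k0] card_mono[of UNIV "{v. P v = 0}"] by simp

lemma Np_pos: "1 \<le> card (UNIV :: 'v set) - p"
proof -
  obtain w where "P w = 1" using part_ne[OF k1] by blast
  then have "w \<in> {v. P v \<noteq> 0}" by simp
  then have "card {v. P v \<noteq> 0} > 0" by (metis card_gt_0_iff empty_iff finite)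
  then show ?thesis using card_C[OF k0] by simp
qed

lemma alpha0_eq: "alpha0 E = card (UNIV :: 'v set) - p"
  unfolding alpha0_def
proof (rule Least_equality)
  show "\<exists>C. vertex_cover E C \<and> card C = card (UNIV :: 'v set) - p"
    using C_vc[of 0] card_C[OF k0] by blast
next
  fix n assume "\<exists>C. vertex_cover E C \<and> card C = n"
  then obtain C where vc: "vertex_cover E C" and n: "card C = n" by blast
  show "card (UNIV :: 'v set) - p \<le> n"
  proof (cases "C = UNIV")
    case True then show ?thesis using n by simp
  next
    case False
    then obtain w where w: "w \<notin> C" by blast
    have "- C \<subseteq> {v. P v = P w}" using vc w unfolding vc_iff by blast
    then have "card (- C) \<le> p" using cp[OF Pk[of w]] card_mono[of "{v. P v = P w}" "- C"] by simp
    then show ?thesis using card_Compl[of C] n by simp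
  qed
qed

lemma cgc_iff: "cover_graph_complete E \<longleftrightarrow> p = 1"
proof -
  have un: "{v. P v \<noteq> (0::nat)} \<union> {v. P v \<noteq> 1} = UNIV" by auto
  have ne: "{v. P v \<noteq> (0::nat)} \<noteq> {v. P v \<noteq> 1}"
  proof -
    obtain w where w: "P w = 0" using part_ne[OF k0] by blast
    then have "w \<notin> {v. P v \<noteq> (0::nat)}" "w \<in> {v. P v \<noteq> 1}" by auto
    then show ?thesis by blast
  qed
  show ?thesis
  proof
    assume "cover_graph_complete E"
    moreover have "min_vertex_cover E {v. P v \<noteq> (0::nat)}" "min_vertex_cover E {v. P v \<noteq> 1}"
      using mvc_iff k0 k1 by blast+
    ultimately have "card ({v. P v \<noteq> (0::nat)} \<union> {v. P v \<noteq> 1}) = card {v. P v \<noteq> 0} + 1"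
      unfolding cover_graph_complete_def using ne by blast
    then have "card (UNIV :: 'v set) = card (UNIV :: 'v set) - p + 1" using un card_C[OF k0] by simp
    then show "p = 1" using p_pos p_le_N by simp
  next
    assume p1: "p = 1"
    show "cover_graph_complete E" unfolding cover_graph_complete_def mvc_iff
    proof (intro allI impI, elim conjE exE)
      fix C1 C2 i j assume "C1 \<noteq> C2" "i < k" "C1 = {v. P v \<noteq> i}" "j < k" "C2 = {v. P v \<noteq> j}"
      then have "C1 \<union> C2 = UNIV" by auto
      then show "card (C1 \<union> C2) = card C1 + 1" using card_C \<open>i < k\<close> \<open>C1 = _\<close> p1 p_le_N Np_pos by simp
    qed
  qed
qed

lemma cg_iff: "complete_graph E \<longleftrightarrow> p = 1"
proof
  assume cg: "complete_graph E"
  show "p = 1"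
  proof (rule ccontr)
    assume "p \<noteq> 1"
    then have "card {v. P v = 0} \<ge> 2" using cp[OF k0] p_pos by simp
    then obtain u v where uv: "u \<noteq> v" "u \<in> {v. P v = 0}" "v \<in> {v. P v = 0}"
      using card_le_Suc0_iff_eq[of "{v. P v = 0}"] by fastforce
    then have "{u, v} \<in> E" using cg unfolding complete_graph_def by blast
    then obtain u' v' where "{u, v} = {u', v'}" "P u' \<noteq> P v'" unfolding E by blast
    then show False using uv by (auto simp: doubleton_eq_iff)
  qed
next
  assume p1: "p = 1"
  show "complete_graph E" unfolding complete_graph_def
  proof (intro allI impI)
    fix u v :: 'v assume "u \<noteq> v"
    have "P u \<noteq> P v"
    proof
      assume "P u = P v"
      then have "{u, v} \<subseteq> {w. P w = P u}" by auto
      then have "card {u, v} \<le> 1" using cp[OF Pk[of u]] p1 card_mono[of "{w. P w = P u}" "{u,v}"] by simp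
      then show False using \<open>u \<noteq> v\<close> by simp
    qed
    then show "{u, v} \<in> E" unfolding E by blast
  qed
qed


end

definition ind :: "'v set \<Rightarrow> ('v \<Rightarrow>\<^sub>0 nat)" where
  "ind C = (\<Sum>v\<in>C. Poly_Mapping.single v 1)"

lemma lookup_ind: "finite C \<Longrightarrow> Poly_Mapping.lookup (ind C) w = (if w \<in> C then 1 else 0)"
  unfolding ind_def by (simp add: lookup_sum lookup_single when_def)

lemma prod_var: "finite C \<Longrightarrow> (\<Prod>v\<in>C. var v) = (Poly_Mapping.single (ind C) 1 :: ('v, 'k::comm_ring_1) mpoly)"
proof (induction C rule: finite_induct)
  case empty then show ?case by (simp add: ind_def)
next
  case (insert a F)
  then show ?case by (simp add: ind_def var_def mult_single)
qed

lemma mon_deg_UNIV: "mon_deg (m :: 'v::finite \<Rightarrow>\<^sub>0 nat) = (\<Sum>v\<in>UNIV. Poly_Mapping.lookup m v)"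
  unfolding mon_deg_def by (rule sum.mono_neutral_left) (auto simp: in_keys_iff)

lemma mon_deg_add: "mon_deg ((x :: 'v::finite \<Rightarrow>\<^sub>0 nat) + y) = mon_deg x + mon_deg y"
  by (simp add: mon_deg_UNIV lookup_add sum.distrib)

lemma mon_deg_single: "mon_deg (Poly_Mapping.single (v :: 'v::finite) (1::nat)) = 1"
  by (simp add: mon_deg_UNIV lookup_single when_def)

lemma mon_deg_ind: "mon_deg (ind (C :: 'v::finite set)) = card C"
  by (simp add: mon_deg_UNIV lookup_ind sum.If_cases)

lemma deg_ge:
  assumes "\<forall>v\<in>C. 0 < Poly_Mapping.lookup m v"
  shows "card C \<le> mon_deg (m :: 'v::finite \<Rightarrow>\<^sub>0 nat)"
proof -
  have "card C = (\<Sum>v\<in>C. 1)" by simp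
  also have "\<dots> \<le> (\<Sum>v\<in>C. Poly_Mapping.lookup m v)"
    by (rule sum_mono) (use assms in auto)
  also have "\<dots> \<le> (\<Sum>v\<in>UNIV. Poly_Mapping.lookup m v)"
    by (rule sum_mono2) auto
  finally show ?thesis by (simp add: mon_deg_UNIV)
qed

lemma deg_eq:
  assumes pos: "\<forall>v\<in>C. 0 < Poly_Mapping.lookup m v" and le: "mon_deg (m :: 'v::finite \<Rightarrow>\<^sub>0 nat) \<le> card C"
  shows "Poly_Mapping.lookup m w = (if w \<in> C then 1 else 0)"
proof -
  let ?l = "Poly_Mapping.lookup m"
  have split: "(\<Sum>v\<in>UNIV. ?l v) = (\<Sum>v\<in>C. ?l v) + (\<Sum>v\<in>-C. ?l v)"
  proof -
    have "(\<Sum>v\<in>UNIV. ?l v) = (\<Sum>v\<in>C \<union> -C. ?l v)" by simp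
    also have "\<dots> = (\<Sum>v\<in>C. ?l v) + (\<Sum>v\<in>-C. ?l v)" by (rule sum.union_disjoint) auto
    finally show ?thesis .
  qed
  have c1: "card C \<le> (\<Sum>v\<in>C. ?l v)"
  proof -
    have "card C = (\<Sum>v\<in>C. 1)" by simp
    also have "\<dots> \<le> (\<Sum>v\<in>C. ?l v)" by (rule sum_mono) (use pos in auto)
    finally show ?thesis .
  qed
  have tot: "(\<Sum>v\<in>C. ?l v) + (\<Sum>v\<in>-C. ?l v) \<le> card C" using le split by (simp add: mon_deg_UNIV)
  then have "(\<Sum>v\<in>-C. ?l v) = 0" using c1 by linarith
  then have z: "\<forall>a\<in>-C. ?l a = 0" by simp
  have e: "(\<Sum>v\<in>C. ?l v - 1) = 0"
  proof -
    have "(\<Sum>v\<in>C. ?l v - 1) + (\<Sum>v\<in>C. 1) = (\<Sum>v\<in>C. ?l v)"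
      by (subst sum.distrib[symmetric]) (rule sum.cong, use pos in auto)
    then show ?thesis using tot c1 card_eq_sum[of C] by linarith
  qed
  show ?thesis
  proof (cases "w \<in> C")
    case True
    then have "?l w - 1 = 0" using e by simp
    then show ?thesis using True pos by force
  next
    case False
    then show ?thesis using z by simp
  qed
qed

context hcm
begin

definition Phi :: "('v \<Rightarrow>\<^sub>0 nat) \<Rightarrow> bool" where
  "Phi m \<longleftrightarrow> (\<exists>i<k. \<forall>v. P v \<noteq> i \<longrightarrow> 0 < Poly_Mapping.lookup m v)"

lemma Phi_up: "Phi y \<Longrightarrow> Phi (x + y)"
proof -
  assume "Phi y"
  then obtain i where "i < k" "\<forall>v. P v \<noteq> i \<longrightarrow> 0 < Poly_Mapping.lookup y v" unfolding Phi_def by blast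
  then have "i < k \<and> (\<forall>v. P v \<noteq> i \<longrightarrow> 0 < Poly_Mapping.lookup (x + y) v)" by (simp add: lookup_add)
  then show "Phi (x + y)" unfolding Phi_def by blast
qed

lemma gens_eq: "{(\<Prod>v\<in>C. var v) :: ('v, 'k::comm_ring_1) mpoly | C. min_vertex_cover E C}
   = {(Poly_Mapping.single (ind {v. P v \<noteq> i}) 1 :: ('v, 'k::comm_ring_1) mpoly) | i. i < k}"
proof (rule set_eqI, rule iffI)
  fix x :: "('v, 'k) mpoly" assume "x \<in> {(\<Prod>v\<in>C. var v) | C. min_vertex_cover E C}"
  then obtain C where x: "x = (\<Prod>v\<in>C. var v)" and "min_vertex_cover E C" by blast
  then obtain i where i: "i < k" "C = {v. P v \<noteq> i}" unfolding mvc_iff by blast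
  have "x = Poly_Mapping.single (ind {v. P v \<noteq> i}) 1" unfolding x i(2) by (rule prod_var) simp
  then show "x \<in> {(Poly_Mapping.single (ind {v. P v \<noteq> i}) 1 :: ('v, 'k) mpoly) | i. i < k}"
    using i(1) by blast
next
  fix x :: "('v, 'k) mpoly" assume "x \<in> {(Poly_Mapping.single (ind {v. P v \<noteq> i}) 1 :: ('v, 'k) mpoly) | i. i < k}"
  then obtain i where x: "x = Poly_Mapping.single (ind {v. P v \<noteq> i}) 1" and i: "i < k" by blast
  have "x = (\<Prod>v\<in>{v. P v \<noteq> i}. var v)" unfolding x by (rule prod_var[symmetric]) simp
  moreover have "min_vertex_cover E {v. P v \<noteq> i}" unfolding mvc_iff using i by blast
  ultimately show "x \<in> {(\<Prod>v\<in>C. var v) | C. min_vertex_cover E C}" by blast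
qed

lemma I_char: "(g \<in> (cover_ideal E :: ('v, 'k::field) mpoly set)) \<longleftrightarrow> (\<forall>m\<in>Poly_Mapping.keys g. Phi m)"
proof
  assume "g \<in> cover_ideal E"
  moreover have "cover_ideal E \<subseteq> {g :: ('v, 'k) mpoly. \<forall>m\<in>Poly_Mapping.keys g. Phi m}"
    unfolding cover_ideal_def gens_eq
  proof (rule ideal_gen_least)
    show "is_ideal {g :: ('v, 'k) mpoly. \<forall>m\<in>Poly_Mapping.keys g. Phi m}"
      by (rule monomial_ideal) (rule Phi_up)
    show "{(Poly_Mapping.single (ind {v. P v \<noteq> i}) 1 :: ('v, 'k) mpoly) | i. i < k}
        \<subseteq> {g. \<forall>m\<in>Poly_Mapping.keys g. Phi m}"
    proof (rule subsetI)
      fix x assume "x \<in> {(Poly_Mapping.single (ind {v. P v \<noteq> i}) 1 :: ('v, 'k) mpoly) | i. i < k}"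
      then obtain i where x: "x = Poly_Mapping.single (ind {v. P v \<noteq> i}) 1" and i: "i < k" by blast
      have "\<forall>v. P v \<noteq> i \<longrightarrow> 0 < Poly_Mapping.lookup (ind {v. P v \<noteq> i}) v" by (simp add: lookup_ind)
      then have "Phi (ind {v. P v \<noteq> i})" unfolding Phi_def using i by blast
      then show "x \<in> {g. \<forall>m\<in>Poly_Mapping.keys g. Phi m}" unfolding x by simp
    qed
  qed
  ultimately show "\<forall>m\<in>Poly_Mapping.keys g. Phi m" by blast
next
  assume H: "\<forall>m\<in>Poly_Mapping.keys g. Phi m"
  let ?I = "cover_ideal E :: ('v, 'k) mpoly set"
  have Iid: "is_ideal ?I" unfolding cover_ideal_def by (rule is_ideal_ideal_gen)
  have trm: "Poly_Mapping.single m (Poly_Mapping.lookup g m) \<in> ?I" if m: "m \<in> Poly_Mapping.keys g" for m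
  proof -
    obtain i where i: "i < k" "\<forall>v. P v \<noteq> i \<longrightarrow> 0 < Poly_Mapping.lookup m v"
      using H m unfolding Phi_def by blast
    define mu where "mu = ind {v. P v \<noteq> i}"
    have gen: "Poly_Mapping.single mu 1 \<in> ?I"
    proof -
      have "Poly_Mapping.single mu 1 \<in> {(Poly_Mapping.single (ind {v. P v \<noteq> i}) 1 :: ('v, 'k) mpoly) | i. i < k}"
        unfolding mu_def using i(1) by blast
      then show ?thesis unfolding cover_ideal_def gens_eq by (rule subsetD[OF ideal_gen_sup])
    qed
    have "(m - mu) + mu = m"
      by (rule poly_mapping_eqI) (use i(2) in \<open>auto simp: lookup_add lookup_minus mu_def lookup_ind\<close>)
    then have "Poly_Mapping.single m (Poly_Mapping.lookup g m) = Poly_Mapping.single (m - mu) (Poly_Mapping.lookup g m) * Poly_Mapping.single mu 1"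
      by (simp add: mult_single)
    then show ?thesis using gen Iid unfolding is_ideal_def by simp
  qed
  have "g = (\<Sum>m\<in>Poly_Mapping.keys g. Poly_Mapping.single m (Poly_Mapping.lookup g m))"
    by (rule poly_expand)
  also have "\<dots> \<in> ?I"
    by (rule ideal_sum[OF Iid]) (auto intro: trm)
  finally show "g \<in> ?I" .
qed

end



context hcm
begin

lemma I_ideal: "is_ideal (cover_ideal E :: ('v, 'k::field) mpoly set)"
  unfolding cover_ideal_def by (rule is_ideal_ideal_gen)

lemma gen_in: "i < k \<Longrightarrow> (\<Prod>v\<in>{v. P v \<noteq> i}. var v) \<in> (cover_ideal E :: ('v, 'k::field) mpoly set)"
proof -
  assume i: "i < k"
  have "min_vertex_cover E {v. P v \<noteq> i}" unfolding mvc_iff using i by blast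
  then have "(\<Prod>v\<in>{v. P v \<noteq> i}. var v) \<in> {(\<Prod>v\<in>C. var v) :: ('v, 'k) mpoly | C. min_vertex_cover E C}"
    by blast
  then show ?thesis unfolding cover_ideal_def by (rule subsetD[OF ideal_gen_sup])
qed

lemma var_in_colon:
  assumes pr: "prime_ideal (colon_ideal (cover_ideal E :: ('v, 'k::field) mpoly set) f)" and i: "i < k"
  shows "\<exists>j. P j \<noteq> i \<and> var j * f \<in> (cover_ideal E :: ('v, 'k) mpoly set)"
proof -
  have "(\<Prod>v\<in>{v. P v \<noteq> i}. var v) \<in> colon_ideal (cover_ideal E :: ('v, 'k) mpoly set) f"
    by (rule subsetD[OF ideal_sub_colon[OF I_ideal] gen_in[OF i]])
  then have "\<exists>v\<in>{v. P v \<noteq> i}. var v \<in> colon_ideal (cover_ideal E :: ('v, 'k) mpoly set) f"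
    by (rule prime_prod[OF pr, rotated]) simp
  then obtain j where "P j \<noteq> i" "var j \<in> colon_ideal (cover_ideal E :: ('v, 'k) mpoly set) f"
    by blast
  then have "P j \<noteq> i \<and> var j * f \<in> (cover_ideal E :: ('v, 'k) mpoly set)" unfolding colon_ideal_def by simp
  then show ?thesis by blast
qed

lemma var_mult_key:
  assumes "var j * f \<in> (cover_ideal E :: ('v, 'k::field) mpoly set)" "u \<in> Poly_Mapping.keys f"
  shows "\<exists>i<k. \<forall>v. Poly_Mapping.lookup (Poly_Mapping.single j 1 + u) v = 0 \<longrightarrow> P v = i"
proof -
  have "Poly_Mapping.lookup (var j * f) (Poly_Mapping.single j 1 + u) = Poly_Mapping.lookup f u"
    unfolding var_def by (rule lookup_single_mult)
  then have "Poly_Mapping.single j 1 + u \<in> Poly_Mapping.keys (var j * f)"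
    using assms(2) by (simp add: in_keys_iff)
  then have "Phi (Poly_Mapping.single j 1 + u)" using assms(1) I_char by blast
  then obtain i where "i < k" "\<forall>v. P v \<noteq> i \<longrightarrow> 0 < Poly_Mapping.lookup (Poly_Mapping.single j 1 + u) v"
    unfolding Phi_def by blast
  then have "i < k \<and> (\<forall>v. Poly_Mapping.lookup (Poly_Mapping.single j 1 + u) v = 0 \<longrightarrow> P v = i)"
    by (metis less_irrefl)
  then show ?thesis by blast
qed

lemma lower:
  assumes f: "f \<in> homog_of_deg d"
    and pr: "prime_ideal (colon_ideal (cover_ideal E :: ('v, 'k::field) mpoly set) f)"
  shows "card (UNIV :: 'v set) - p \<le> d + 1 \<and> (2 \<le> p \<longrightarrow> d + 1 \<noteq> card (UNIV :: 'v set) - p)"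
proof -
  have f0: "f \<noteq> 0" using colon_prime_ne0[OF pr I_ideal] .
  then obtain u where u: "u \<in> Poly_Mapping.keys f" by fastforce
  have du: "mon_deg u = d" using f u unfolding homog_of_deg_def by blast
  obtain j where j: "P j \<noteq> 0" "var j * f \<in> (cover_ideal E :: ('v, 'k) mpoly set)"
    using var_in_colon[OF pr k0] by blast
  obtain j' where j': "P j' \<noteq> P j" "var j' * f \<in> (cover_ideal E :: ('v, 'k) mpoly set)"
    using var_in_colon[OF pr Pk[of j]] by blast
  obtain i0 where i0: "i0 < k" "\<forall>v. Poly_Mapping.lookup (Poly_Mapping.single j 1 + u) v = 0 \<longrightarrow> P v = i0"
    using var_mult_key[OF j(2) u] by blast
  obtain i1 where i1: "i1 < k" "\<forall>v. Poly_Mapping.lookup (Poly_Mapping.single j' 1 + u) v = 0 \<longrightarrow> P v = i1"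
    using var_mult_key[OF j'(2) u] by blast
  have pos0: "\<forall>v\<in>{v. P v \<noteq> i0}. 0 < Poly_Mapping.lookup (Poly_Mapping.single j 1 + u) v"
    using i0(2) by auto
  have pos1: "\<forall>v\<in>{v. P v \<noteq> i1}. 0 < Poly_Mapping.lookup (Poly_Mapping.single j' 1 + u) v"
    using i1(2) by auto
  have dj: "mon_deg (Poly_Mapping.single j 1 + u) = d + 1"
    by (subst mon_deg_add, subst mon_deg_single, simp add: du)
  have dj': "mon_deg (Poly_Mapping.single j' 1 + u) = d + 1"
    by (subst mon_deg_add, subst mon_deg_single, simp add: du)
  have A: "card (UNIV :: 'v set) - p \<le> d + 1"
    using deg_ge[OF pos0] dj card_C[OF i0(1)] by simp
  have B: "d + 1 \<noteq> card (UNIV :: 'v set) - p" if p2: "2 \<le> p"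
  proof
    assume eq: "d + 1 = card (UNIV :: 'v set) - p"
    have H1: "(if w = j then 1 else 0) + Poly_Mapping.lookup u w = (if P w \<noteq> i0 then 1 else 0)" for w
    proof -
      have "Poly_Mapping.lookup (Poly_Mapping.single j 1 + u) w = (if w \<in> {v. P v \<noteq> i0} then 1 else 0)"
        by (rule deg_eq[OF pos0]) (metis dj eq card_C[OF i0(1)] order_refl)
      then show ?thesis by (auto simp: lookup_add lookup_single when_def split: if_splits)
    qed
    have H2: "(if w = j' then 1 else 0) + Poly_Mapping.lookup u w = (if P w \<noteq> i1 then 1 else 0)" for w
    proof -
      have "Poly_Mapping.lookup (Poly_Mapping.single j' 1 + u) w = (if w \<in> {v. P v \<noteq> i1} then 1 else 0)"
        by (rule deg_eq[OF pos1]) (metis dj' eq card_C[OF i1(1)] order_refl)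
      then show ?thesis by (auto simp: lookup_add lookup_single when_def split: if_splits)
    qed
    have jj: "j \<noteq> j'" using j'(1) by auto
    obtain x where x: "P x = P j'" "x \<noteq> j'"
    proof -
      have "card {v. P v = P j'} \<ge> 2" using cp[OF Pk[of j']] p2 by simp
      then obtain y z where "y \<in> {v. P v = P j'}" "z \<in> {v. P v = P j'}" "y \<noteq> z"
        using card_le_Suc0_iff_eq[of "{v. P v = P j'}"] by fastforce
      then show ?thesis using that by blast
    qed
    have a1: "P j \<noteq> i0" "Poly_Mapping.lookup u j = 0" using H1[of j] by (auto split: if_splits)
    have a2: "P j = i1" using H2[of j] a1(2) jj by (auto split: if_splits)
    have a3: "P j' \<noteq> i1" "Poly_Mapping.lookup u j' = 0" using H2[of j'] by (auto split: if_splits)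
    have a4: "P j' = i0" using H1[of j'] a3(2) jj by (auto split: if_splits)
    have a5: "Poly_Mapping.lookup u x = 0" using H1[of x] x a4 by (auto split: if_splits)
    show False using H2[of x] x a5 a2 j'(1) by (auto split: if_splits)
  qed
  show ?thesis using A B by blast
qed


lemma witness:
  "\<exists>f\<in>homog_of_deg (card (UNIV :: 'v set) - 2).
     prime_ideal (colon_ideal (cover_ideal E :: ('v, 'k::field) mpoly set) f)"
proof -
  obtain a where a: "P a = 0" using part_ne[OF k0] by blast
  obtain b where b: "P b = 1" using part_ne[OF k1] by blast
  have ab: "a \<noteq> b" using a b by auto
  define mu where "mu = ind (- {a, b})"
  define f where "f = (Poly_Mapping.single mu 1 :: ('v, 'k) mpoly)"
  have lmu: "Poly_Mapping.lookup mu v = (if v = a \<or> v = b then 0 else 1)" for v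
    unfolding mu_def by (simp add: lookup_ind)
  have "mon_deg mu = card (- {a, b})" unfolding mu_def by (rule mon_deg_ind)
  also have "\<dots> = card (UNIV :: 'v set) - 2" using ab by (simp add: card_Compl)
  finally have dmu: "mon_deg mu = card (UNIV :: 'v set) - 2" .
  have hom: "f \<in> homog_of_deg (card (UNIV :: 'v set) - 2)"
    unfolding homog_of_deg_def f_def using dmu by simp
  have col: "colon_ideal (cover_ideal E :: ('v, 'k) mpoly set) f = Qab a b"
  proof (rule set_eqI)
    fix g :: "('v, 'k) mpoly"
    have c1: "g \<in> colon_ideal (cover_ideal E) f \<longleftrightarrow> (\<forall>m\<in>Poly_Mapping.keys (f * g). Phi m)"
      unfolding colon_ideal_def by (simp add: I_char mult.commute)
    show "g \<in> colon_ideal (cover_ideal E) f \<longleftrightarrow> g \<in> Qab a b"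
    proof
      assume "g \<in> colon_ideal (cover_ideal E) f"
      then have H: "\<forall>m\<in>Poly_Mapping.keys (f * g). Phi m" using c1 by blast
      show "g \<in> Qab a b" unfolding Qab_def
      proof (rule CollectI, rule ballI, rule ccontr)
        fix m assume m: "m \<in> Poly_Mapping.keys g"
          and n: "\<not> (0 < Poly_Mapping.lookup m a \<or> 0 < Poly_Mapping.lookup m b)"
        have "Poly_Mapping.lookup (f * g) (mu + m) = Poly_Mapping.lookup g m"
          unfolding f_def by (rule lookup_single_mult)
        then have "mu + m \<in> Poly_Mapping.keys (f * g)" using m by (simp add: in_keys_iff)
        then have "Phi (mu + m)" using H by blast
        then obtain i where "\<forall>v. P v \<noteq> i \<longrightarrow> 0 < Poly_Mapping.lookup (mu + m) v"
          unfolding Phi_def by blast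
        moreover have "Poly_Mapping.lookup (mu + m) a = 0" "Poly_Mapping.lookup (mu + m) b = 0"
          using n by (simp_all add: lookup_add lmu)
        ultimately have "P a = i" "P b = i" by (metis less_irrefl)+
        then show False using a b by simp
      qed
    next
      assume g: "g \<in> Qab a b"
      have "\<forall>m'\<in>Poly_Mapping.keys (f * g). Phi m'"
      proof
        fix m' assume "m' \<in> Poly_Mapping.keys (f * g)"
        then obtain m where m: "m \<in> Poly_Mapping.keys g" and m': "m' = mu + m"
          using keys_single_mult[of mu g] unfolding f_def by blast
        have "0 < Poly_Mapping.lookup m a \<or> 0 < Poly_Mapping.lookup m b"
          using g m unfolding Qab_def by simp
        then show "Phi m'"
        proof
          assume pa: "0 < Poly_Mapping.lookup m a"
          have "\<forall>v. P v \<noteq> 1 \<longrightarrow> 0 < Poly_Mapping.lookup m' v"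
            using pa b ab unfolding m' by (auto simp: lookup_add lmu)
          then show "Phi m'" unfolding Phi_def using k1 by blast
        next
          assume pb: "0 < Poly_Mapping.lookup m b"
          have "\<forall>v. P v \<noteq> 0 \<longrightarrow> 0 < Poly_Mapping.lookup m' v"
            using pb a ab unfolding m' by (auto simp: lookup_add lmu)
          then show "Phi m'" unfolding Phi_def using k0 by blast
        qed
      qed
      then show "g \<in> colon_ideal (cover_ideal E) f" using c1 by blast
    qed
  qed
  show ?thesis using hom col Qab_prime by metis
qed

lemma vnum:
  "(p = 1 \<longrightarrow> v_number (cover_ideal E :: ('v, 'k::field) mpoly set) = card (UNIV :: 'v set) - 2) \<and>
   (2 \<le> p \<longrightarrow> v_number (cover_ideal E :: ('v, 'k) mpoly set) \<noteq> card (UNIV :: 'v set) - p - 1)"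
proof -
  let ?I = "cover_ideal E :: ('v, 'k) mpoly set"
  let ?N = "card (UNIV :: 'v set)"
  define Q where "Q d \<longleftrightarrow> (\<exists>f\<in>homog_of_deg d. \<exists>P\<in>Ass ?I. colon_ideal ?I f = P)" for d
  have Qe: "Q d \<longleftrightarrow> (\<exists>f\<in>homog_of_deg d. prime_ideal (colon_ideal ?I f))" for d
    unfolding Q_def Ass_def by auto
  have vn: "v_number ?I = (LEAST d. Q d)" unfolding v_number_def Q_def by simp
  have QN: "Q (?N - 2)" using witness Qe by blast
  then have Qv: "Q (v_number ?I)" unfolding vn by (rule LeastI)
  have le: "v_number ?I \<le> ?N - 2" unfolding vn using QN by (rule Least_le)
  obtain f where "f \<in> homog_of_deg (v_number ?I)" "prime_ideal (colon_ideal ?I f)"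
    using Qv Qe by blast
  then have L: "?N - p \<le> v_number ?I + 1 \<and> (2 \<le> p \<longrightarrow> v_number ?I + 1 \<noteq> ?N - p)"
    by (rule lower)
  show ?thesis using L le Np_pos by auto
qed

end

theorem corollary3p15:
  fixes E :: "'v::finite set set" and k p :: nat
  assumes "homog_complete_multipartite E k p"
  shows "(cover_graph_complete E \<longleftrightarrow> complete_graph E) \<and>
         (complete_graph E \<longleftrightarrow>
            v_number (cover_ideal E :: ('v, 'k::field) mpoly set) = alpha0 E - 1)"
proof -
  from assms obtain P :: "'v \<Rightarrow> nat" where h: "2 \<le> k" "\<forall>v. P v < k"
    "\<forall>i<k. card {v. P v = i} = p" "E = {{u, v} | u v. P u \<noteq> P v}"
    unfolding homog_complete_multipartite_def by blast
  interpret hcm E k p P using h by unfold_locales auto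
  have vn: "(p = 1 \<longrightarrow> v_number (cover_ideal E :: ('v, 'k) mpoly set) = card (UNIV :: 'v set) - 2) \<and>
   (2 \<le> p \<longrightarrow> v_number (cover_ideal E :: ('v, 'k) mpoly set) \<noteq> card (UNIV :: 'v set) - p - 1)"
    by (rule vnum)
  show ?thesis
  proof (cases "p = 1")
    case True
    then show ?thesis using vn cgc_iff cg_iff alpha0_eq by simp
  next
    case False
    then have "2 \<le> p" using p_pos by simp
    then show ?thesis using vn cgc_iff cg_iff alpha0_eq False by simp
  qed
qed

end
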